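(* Let $N,q\in\mathbb Z$, $Q\in\mathbb Q$ and $i\in\mathbb Z$ with $i\le N$. Then $$z^i\equiv\sum_{k=1}^{N-q}\sum_{j=1}^{k}\binom{-Q}{-i+q+j}\binom{Q}{k-j}z^{q+k}\pmod{O(N,Q,q;z)}.$$
   Context: For $N,q\in\mathbb Z$ and $Q\in\mathbb Q$, $O(N,Q,q;z)$ is the subspace of $\mathbb C[z,z^{-1}]$ spanned by the monomials $z^i$ with $i\ge N+1$ together with the Laurent polynomials $\sum_{i=0}^{N-q-j}\binom Qi z^{i+q+j}$ for $j=0,-1,-2,\dots$ (equivalently $\mathrm{Res}_x\big((1+x)^Qx^{q+j}\sum_{i\le N}z^ix^{-i-1}\big)$). Binomial coefficients $\binom{c}{k}$ with $k<0$ are $0$; empty sums are $0$. *)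

theory Defs
  imports Complex_Main
begin

text \<open>Laurent polynomials in C[z,z^-1] are represented by their coefficient
functions int => complex (finitely supported); z^m is the monomial below.\<close>

definition zmono :: "int \<Rightarrow> int \<Rightarrow> complex" where
  "zmono m = (\<lambda>n. if n = m then 1 else 0)"

definition binomZ :: "complex \<Rightarrow> int \<Rightarrow> complex" where
  "binomZ c k = (if k < 0 then 0 else c gchoose (nat k))"

definition lin_span :: "(int \<Rightarrow> complex) set \<Rightarrow> (int \<Rightarrow> complex) set" where
  "lin_span S = {f. \<exists>T c. finite T \<and> T \<subseteq> S \<and> f = (\<lambda>n. \<Sum>g\<in>T. c g * g n)}"

definition Ogen :: "int \<Rightarrow> rat \<Rightarrow> int \<Rightarrow> int \<Rightarrow> int \<Rightarrow> complex" where
  "Ogen N Q q j = (\<lambda>n. \<Sum>i\<in>{0..N-q-j}. binomZ (of_rat Q) i * zmono (i+q+j) n)"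

definition Ospace :: "int \<Rightarrow> rat \<Rightarrow> int \<Rightarrow> (int \<Rightarrow> complex) set" where
  "Ospace N Q q = lin_span ({zmono i | i. i \<ge> N + 1} \<union> {Ogen N Q q j | j. j \<le> 0})"

end

theory Submission
  imports Defs "HOL-Computational_Algebra.Formal_Power_Series"
begin

lemma lin_span_zero: "(\<lambda>n. 0) \<in> lin_span S"
  unfolding lin_span_def by (rule CollectI, rule exI[of _ "{}"]) auto

lemma lin_span_scale: "g \<in> S \<Longrightarrow> (\<lambda>n. a * g n) \<in> lin_span S"
  unfolding lin_span_def by (rule CollectI, rule exI[of _ "{g}"], rule exI[of _ "\<lambda>_. a"]) auto

lemma lin_span_add:
  assumes "f1 \<in> lin_span S" "f2 \<in> lin_span S"
  shows "(\<lambda>n. f1 n + f2 n) \<in> lin_span S"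
proof -
  obtain T1 c1 where 1: "finite T1" "T1 \<subseteq> S" "f1 = (\<lambda>n. \<Sum>g\<in>T1. c1 g * g n)"
    using assms(1) unfolding lin_span_def by blast
  obtain T2 c2 where 2: "finite T2" "T2 \<subseteq> S" "f2 = (\<lambda>n. \<Sum>g\<in>T2. c2 g * g n)"
    using assms(2) unfolding lin_span_def by blast
  define c where "c g = (if g \<in> T1 then c1 g else 0) + (if g \<in> T2 then c2 g else 0)" for g
  have "(\<lambda>n. f1 n + f2 n) = (\<lambda>n. \<Sum>g\<in>T1 \<union> T2. c g * g n)"
  proof
    fix n
    have a: "(\<Sum>g\<in>T1 \<union> T2. (if g \<in> T1 then c1 g * g n else 0)) = (\<Sum>g\<in>T1. c1 g * g n)"
      using 1(1) 2(1) sum.inter_restrict[of "T1 \<union> T2" "\<lambda>g. c1 g * g n" T1] by (simp add: Int_absorb2)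
    have b: "(\<Sum>g\<in>T1 \<union> T2. (if g \<in> T2 then c2 g * g n else 0)) = (\<Sum>g\<in>T2. c2 g * g n)"
      using 1(1) 2(1) sum.inter_restrict[of "T1 \<union> T2" "\<lambda>g. c2 g * g n" T2] by (simp add: Int_absorb2)
    have "(\<Sum>g\<in>T1 \<union> T2. c g * g n) = (\<Sum>g\<in>T1 \<union> T2. (if g \<in> T1 then c1 g * g n else 0) + (if g \<in> T2 then c2 g * g n else 0))"
      by (rule sum.cong) (auto simp: c_def algebra_simps)
    also have "\<dots> = f1 n + f2 n" by (simp add: sum.distrib a b 1(3) 2(3))
    finally show "f1 n + f2 n = (\<Sum>g\<in>T1 \<union> T2. c g * g n)" by simp
  qed
  then show ?thesis unfolding lin_span_def using 1 2 by blast
qed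

lemma lin_span_sum:
  assumes "finite A" "\<And>a. a \<in> A \<Longrightarrow> f a \<in> lin_span S"
  shows "(\<lambda>n. \<Sum>a\<in>A. f a n) \<in> lin_span S"
  using assms
proof (induction A rule: finite_induct)
  case empty then show ?case using lin_span_zero by simp
next
  case (insert x F)
  then show ?case using lin_span_add[of "f x" S "\<lambda>n. \<Sum>a\<in>F. f a n"] by simp
qed

lemma Ogen_eq:
  "Ogen N Q q j n = (if q + j \<le> n \<and> n \<le> N then binomZ (of_rat Q) (n - q - j) else 0)"
proof -
  have "Ogen N Q q j n = (\<Sum>i\<in>{0..N-q-j}. if i = n - q - j then binomZ (of_rat Q) i else 0)"
    unfolding Ogen_def zmono_def by (rule sum.cong) auto
  also have "\<dots> = (if n - q - j \<in> {0..N-q-j} then binomZ (of_rat Q) (n - q - j) else 0)"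
    by (subst sum.delta) auto
  finally show ?thesis by auto
qed

lemma sum_int_shift:
  fixes f :: "int \<Rightarrow> complex"
  assumes "a \<le> b"
  shows "sum f {a..b} = (\<Sum>m\<le>nat (b - a). f (a + int m))"
proof -
  have "{a..b} = (\<lambda>m. a + int m) ` {..nat (b - a)}"
  proof
    show "{a..b} \<subseteq> (\<lambda>m. a + int m) ` {..nat (b - a)}"
    proof
      fix x assume "x \<in> {a..b}"
      then show "x \<in> (\<lambda>m. a + int m) ` {..nat (b - a)}"
        by (intro image_eqI[of _ _ "nat (x - a)"]) auto
    qed
  qed (use assms in auto)
  moreover have "inj_on (\<lambda>m. a + int m) {..nat (b - a)}" by (auto simp: inj_on_def)
  ultimately show ?thesis by (simp add: sum.reindex)
qed

lemma key:
  fixes N q i L n :: int and Q :: rat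
  assumes "i \<le> N" "L \<le> i - q"
  shows "zmono i n = (\<Sum>j\<in>{L..N-q}. binomZ (- of_rat Q) (- i + q + j) * Ogen N Q q j n)"
proof (cases "n \<le> N \<and> i \<le> n")
  case True
  let ?f = "\<lambda>j. binomZ (- of_rat Q) (- i + q + j) * Ogen N Q q j n"
  have "(\<Sum>j\<in>{L..N-q}. ?f j) = (\<Sum>j\<in>{i-q..n-q}. ?f j)"
    by (rule sum.mono_neutral_right) (use True assms in \<open>auto simp: Ogen_eq binomZ_def\<close>)
  also have "\<dots> = (\<Sum>m\<le>nat (n - i). ?f (i - q + int m))"
    using True by (subst sum_int_shift) auto
  also have "\<dots> = (\<Sum>m\<le>nat (n - i). ((- of_rat Q) gchoose m) * (of_rat Q gchoose (nat (n - i) - m)))"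
  proof (rule sum.cong)
    fix m assume m: "m \<in> {..nat (n - i)}"
    then have e1: "n - q - (i - q + int m) = int (nat (n - i) - m)" using True by auto
    have e2: "- i + q + (i - q + int m) = int m" by simp
    have e4: "nat (n - i - int m) = nat (n - i) - m" using m True by auto
    have e3: "q + (i - q + int m) \<le> n" using m True by auto
    show "?f (i - q + int m) = ((- of_rat Q) gchoose m) * (of_rat Q gchoose (nat (n - i) - m))"
      using True e3 by (simp only: Ogen_eq binomZ_def e1 e2) (simp add: e4)
  qed simp
  also have "\<dots> = (- of_rat Q + of_rat Q) gchoose (nat (n - i))"
    using gbinomial_Vandermonde[of "- of_rat Q :: complex" "of_rat Q" "nat (n - i)"]
    by (simp add: atLeast0AtMost)
  also have "\<dots> = zmono i n" using True by (auto simp: gbinomial_0_left zmono_def)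
  finally show ?thesis by simp
next
  case False
  have "(\<Sum>j\<in>{L..N-q}. binomZ (- of_rat Q) (- i + q + j) * Ogen N Q q j n) = 0"
    by (rule sum.neutral) (use False in \<open>auto simp: Ogen_eq binomZ_def\<close>)
  moreover have "zmono i n = 0" using False assms by (auto simp: zmono_def)
  ultimately show ?thesis by simp
qed

lemma swap:
  fixes N q i n :: int and Q :: rat
  shows "(\<Sum>k\<in>{1..N-q}. \<Sum>j\<in>{1..k}.
               binomZ (- of_rat Q) (- i + q + j) * binomZ (of_rat Q) (k - j) * zmono (q + k) n)
    = (\<Sum>j\<in>{1..N-q}. binomZ (- of_rat Q) (- i + q + j) * Ogen N Q q j n)"
proof -
  let ?S = "\<lambda>k. \<Sum>j\<in>{1..k}. binomZ (- of_rat Q) (- i + q + j) * binomZ (of_rat Q) (k - j)"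
  have "(\<Sum>k\<in>{1..N-q}. \<Sum>j\<in>{1..k}.
               binomZ (- of_rat Q) (- i + q + j) * binomZ (of_rat Q) (k - j) * zmono (q + k) n)
      = (\<Sum>k\<in>{1..N-q}. if k = n - q then ?S k else 0)"
    by (rule sum.cong) (auto simp: zmono_def sum_distrib_right[symmetric])
  also have "\<dots> = (if n - q \<in> {1..N-q} then ?S (n - q) else 0)"
    by (subst sum.delta) auto
  also have "\<dots> = (\<Sum>j\<in>{1..N-q}. binomZ (- of_rat Q) (- i + q + j) * Ogen N Q q j n)"
  proof (cases "n - q \<in> {1..N-q}")
    case True
    have "(\<Sum>j\<in>{1..N-q}. binomZ (- of_rat Q) (- i + q + j) * Ogen N Q q j n)
        = (\<Sum>j\<in>{1..n-q}. binomZ (- of_rat Q) (- i + q + j) * Ogen N Q q j n)"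
      by (rule sum.mono_neutral_right) (use True in \<open>auto simp: Ogen_eq\<close>)
    also have "\<dots> = ?S (n - q)"
      by (rule sum.cong) (use True in \<open>auto simp: Ogen_eq\<close>)
    finally show ?thesis using True by simp
  next
    case False
    have "(\<Sum>j\<in>{1..N-q}. binomZ (- of_rat Q) (- i + q + j) * Ogen N Q q j n) = 0"
      by (rule sum.neutral) (use False in \<open>auto simp: Ogen_eq\<close>)
    moreover have "(if n - q \<in> {1..N-q} then ?S (n - q) else 0) = 0"
      using False by (rule if_not_P)
    ultimately show ?thesis by simp
  qed
  finally show ?thesis .
qed

theorem mainTheorem4:
  fixes N q i :: int and Q :: rat
  assumes "i \<le> N"
  shows "(\<lambda>n. zmono i n -
            (\<Sum>k\<in>{1..N-q}. \<Sum>j\<in>{1..k}.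
               binomZ (- of_rat Q) (- i + q + j) * binomZ (of_rat Q) (k - j) * zmono (q + k) n))
         \<in> Ospace N Q q"
proof -
  define L where "L = min (i - q) 1"
  define c where "c j = binomZ (- of_rat Q) (- i + q + j)" for j
  define J where "J = {L..N-q} \<inter> {..0}"
  have JD: "{L..N-q} - {..0} = {1..N-q}" unfolding L_def by auto
  have eq: "(\<lambda>n. zmono i n -
            (\<Sum>k\<in>{1..N-q}. \<Sum>j\<in>{1..k}.
               binomZ (- of_rat Q) (- i + q + j) * binomZ (of_rat Q) (k - j) * zmono (q + k) n))
      = (\<lambda>n. \<Sum>j\<in>J. c j * Ogen N Q q j n)"
  proof
    fix n
    have "zmono i n = (\<Sum>j\<in>{L..N-q}. c j * Ogen N Q q j n)"
      unfolding c_def using key[where L=L and Q=Q and n=n, OF assms] L_def by simp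
    also have "\<dots> = (\<Sum>j\<in>J. c j * Ogen N Q q j n) + (\<Sum>j\<in>{1..N-q}. c j * Ogen N Q q j n)"
      unfolding J_def JD[symmetric] by (rule sum.Int_Diff) simp
    finally show "zmono i n -
            (\<Sum>k\<in>{1..N-q}. \<Sum>j\<in>{1..k}.
               binomZ (- of_rat Q) (- i + q + j) * binomZ (of_rat Q) (k - j) * zmono (q + k) n)
        = (\<Sum>j\<in>J. c j * Ogen N Q q j n)"
      unfolding swap c_def by simp
  qed
  show ?thesis unfolding eq Ospace_def
    by (rule lin_span_sum) (auto simp: J_def intro!: lin_span_scale)
qed

end
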